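(* Let $n$ be a positive integer, let $R_1,R_2,\dots,R_{n+1}$ be commutative rings and let $R=R_1\times R_2\times\cdots\times R_{n+1}$. Then every proper ideal of $R$ is a weakly $n$-absorbing ideal of $R$ if and only if all of the $R_i$'s are fields.
   Context: All rings are commutative with $1\neq0$. A proper ideal $I$ of $R$ is weakly $n$-absorbing if whenever $0\neq a_1\cdots a_{n+1}\in I$ with $a_1,\dots,a_{n+1}\in R$, there are $n$ of the $a_i$'s whose product is in $I$. *)

theory Defs
  imports "HOL-Algebra.Algebra"
begin

definition weakly_n_absorbing :: "('a, 'b) ring_scheme \<Rightarrow> nat \<Rightarrow> 'a set \<Rightarrow> bool" where
  "weakly_n_absorbing R n I \<longleftrightarrow>
     ideal I R \<and> I \<noteq> carrier R \<and>
     (\<forall>a. a \<in> {..n} \<rightarrow> carrier R \<longrightarrow>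
        finprod R a {..n} \<noteq> \<zero>\<^bsub>R\<^esub> \<longrightarrow> finprod R a {..n} \<in> I \<longrightarrow>
        (\<exists>j\<le>n. finprod R a ({..n} - {j}) \<in> I))"

end

theory Submission imports Defs begin

abbreviation "DP \<equiv> RDirProd_list"

lemma P_mult_cons:
  assumes "x \<in> carrier R" "y \<in> carrier R" "xs \<in> carrier (DP Rs)" "ys \<in> carrier (DP Rs)"
  shows "(x # xs) \<otimes>\<^bsub>DP (R # Rs)\<^esub> (y # ys) = (x \<otimes>\<^bsub>R\<^esub> y) # (xs \<otimes>\<^bsub>DP Rs\<^esub> ys)"
proof -
  have h: "(\<lambda>(a, as). a # as) \<in> ring_hom (RDirProd R (DP Rs)) (DP (R # Rs))"
    by (rule RDirProd_list_hom1)
  have c1: "(x, xs) \<in> carrier (RDirProd R (DP Rs))" "(y, ys) \<in> carrier (RDirProd R (DP Rs))"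
    using assms by (auto simp: RDirProd_carrier)
  have "(\<lambda>(a, as). a # as) ((x, xs) \<otimes>\<^bsub>RDirProd R (DP Rs)\<^esub> (y, ys)) = (x # xs) \<otimes>\<^bsub>DP (R # Rs)\<^esub> (y # ys)"
    using ring_hom_mult[OF h c1] by simp
  moreover have "(x, xs) \<otimes>\<^bsub>RDirProd R (DP Rs)\<^esub> (y, ys) = (x \<otimes>\<^bsub>R\<^esub> y, xs \<otimes>\<^bsub>DP Rs\<^esub> ys)"
    by (simp add: RDirProd_def DirProd_def monoid.defs)
  ultimately show ?thesis by simp
qed

lemma P_carrier_iff:
  "xs \<in> carrier (DP Rs) \<longleftrightarrow> length xs = length Rs \<and> (\<forall>i < length Rs. xs ! i \<in> carrier (Rs ! i))"
  using RDirProd_list_carrier_mem RDirProd_list_carrier_memI by metis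

lemma P_mult_nth:
  assumes "xs \<in> carrier (DP Rs)" "ys \<in> carrier (DP Rs)" "i < length Rs"
  shows "(xs \<otimes>\<^bsub>DP Rs\<^esub> ys) ! i = xs ! i \<otimes>\<^bsub>Rs ! i\<^esub> ys ! i"
  using assms
proof (induct Rs arbitrary: xs ys i)
  case Nil then show ?case by simp
next
  case (Cons R Rs)
  obtain x xs' where xs: "xs = x # xs'" "x \<in> carrier R" "xs' \<in> carrier (DP Rs)"
    using Cons.prems(1) unfolding RDirProd_list_carrier by auto
  obtain y ys' where ys: "ys = y # ys'" "y \<in> carrier R" "ys' \<in> carrier (DP Rs)"
    using Cons.prems(2) unfolding RDirProd_list_carrier by auto
  show ?case
  proof (cases i)
    case 0 then show ?thesis using xs ys by (simp add: P_mult_cons)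
  next
    case (Suc j) then show ?thesis using xs ys Cons by (simp add: P_mult_cons)
  qed
qed

lemma P_mult_length:
  assumes "xs \<in> carrier (DP Rs)" "ys \<in> carrier (DP Rs)" "\<And>i. i < length Rs \<Longrightarrow> ring (Rs ! i)"
  shows "length (xs \<otimes>\<^bsub>DP Rs\<^esub> ys) = length Rs"
proof -
  interpret ring "DP Rs" using RDirProd_list_is_ring assms(3) by blast
  show ?thesis using m_closed[OF assms(1,2)] RDirProd_list_carrier_mem by blast
qed

lemma P_one_nth: "i < length Rs \<Longrightarrow> \<one>\<^bsub>DP Rs\<^esub> ! i = \<one>\<^bsub>Rs ! i\<^esub>"
  unfolding RDirProd_list_one by (induct Rs arbitrary: i) (auto simp: nth_Cons split: nat.splits)

lemma P_zero_nth: "i < length Rs \<Longrightarrow> \<zero>\<^bsub>DP Rs\<^esub> ! i = \<zero>\<^bsub>Rs ! i\<^esub>"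
  unfolding RDirProd_list_zero by (induct Rs arbitrary: i) (auto simp: nth_Cons split: nat.splits)

lemma P_zero_length: "length (\<zero>\<^bsub>DP Rs\<^esub>) = length Rs"
  unfolding RDirProd_list_zero by (induct Rs) auto

lemma P_cring:
  assumes "\<And>i. i < length Rs \<Longrightarrow> cring (Rs ! i)"
  shows "cring (DP Rs)"
proof -
  have r: "ring (DP Rs)" using RDirProd_list_is_ring assms cring.axioms(1) by blast
  interpret ring "DP Rs" by (rule r)
  have "comm_monoid (DP Rs)"
  proof (rule monoid_comm_monoidI)
    fix x y assume xy: "x \<in> carrier (DP Rs)" "y \<in> carrier (DP Rs)"
    show "x \<otimes>\<^bsub>DP Rs\<^esub> y = y \<otimes>\<^bsub>DP Rs\<^esub> x"
    proof (rule nth_equalityI)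
      show "length (x \<otimes>\<^bsub>DP Rs\<^esub> y) = length (y \<otimes>\<^bsub>DP Rs\<^esub> x)"
        using m_closed xy RDirProd_list_carrier_mem by metis
      fix i assume "i < length (x \<otimes>\<^bsub>DP Rs\<^esub> y)"
      then have i: "i < length Rs" using m_closed xy RDirProd_list_carrier_mem by metis
      show "(x \<otimes>\<^bsub>DP Rs\<^esub> y) ! i = (y \<otimes>\<^bsub>DP Rs\<^esub> x) ! i"
        using P_mult_nth[OF xy i] P_mult_nth[OF xy(2,1) i] xy i
          cring.cring_simprules(14)[OF assms[OF i]] P_carrier_iff by metis
    qed
  qed
  then show ?thesis by (simp add: cring_def r)
qed


lemma P_finprod_nth:
  assumes cr: "\<And>i. i < length Rs \<Longrightarrow> cring (Rs ! i)"
    and fin: "finite A" and a: "a \<in> A \<rightarrow> carrier (DP Rs)" and i: "i < length Rs"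
  shows "(finprod (DP Rs) a A) ! i = finprod (Rs ! i) (\<lambda>k. a k ! i) A"
proof -
  interpret C: cring "DP Rs" using P_cring cr by blast
  interpret D: cring "Rs ! i" using cr i by blast
  show ?thesis
  using fin a
proof (induct A rule: finite_induct)
  case empty
  show ?case unfolding C.finprod_empty D.finprod_empty by (rule P_one_nth[OF i])
next
  case (insert k F)
  have ak: "a k \<in> carrier (DP Rs)" and aF: "a \<in> F \<rightarrow> carrier (DP Rs)" using insert by auto
  have cF: "(\<lambda>k. a k ! i) \<in> F \<rightarrow> carrier (Rs ! i)" using aF i P_carrier_iff by blast
  have "finprod (DP Rs) a (insert k F) = a k \<otimes>\<^bsub>DP Rs\<^esub> finprod (DP Rs) a F"
    by (rule C.finprod_insert[OF insert(1,2) aF ak])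
  then have "(finprod (DP Rs) a (insert k F)) ! i = a k ! i \<otimes>\<^bsub>Rs ! i\<^esub> (finprod (DP Rs) a F) ! i"
    using P_mult_nth[OF ak C.finprod_closed[OF aF] i] by simp
  also have "\<dots> = finprod (Rs ! i) (\<lambda>k. a k ! i) (insert k F)"
  proof -
    have "a k ! i \<in> carrier (Rs ! i)" using ak i P_carrier_iff by blast
    then show ?thesis using D.finprod_insert[OF insert(1,2) cF] insert(3)[OF aF] by simp
  qed
  finally show ?case .
qed
qed

lemma (in comm_monoid) finprod_single:
  assumes "finite A" "k0 \<in> A" "f \<in> A \<rightarrow> carrier G" "\<And>k. k \<in> A \<Longrightarrow> k \<noteq> k0 \<Longrightarrow> f k = \<one>"
  shows "finprod G f A = f k0"
proof -
  have A: "A = insert k0 (A - {k0})" using assms(2) by blast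
  have "finprod G f A = f k0 \<otimes> finprod G f (A - {k0})"
    by (subst A, rule finprod_insert) (use assms in auto)
  also have "finprod G f (A - {k0}) = \<one>" by (rule finprod_one_eqI) (use assms in auto)
  moreover have "f k0 \<in> carrier G" using assms by auto
  ultimately show ?thesis by simp
qed

lemma (in cring) finprod_zero_factor:
  assumes "finite A" "k0 \<in> A" "f \<in> A \<rightarrow> carrier R" "f k0 = \<zero>"
  shows "finprod R f A = \<zero>"
proof -
  have A: "A = insert k0 (A - {k0})" using assms(2) by blast
  have "finprod R f A = f k0 \<otimes> finprod R f (A - {k0})"
    by (subst A, rule finprod_insert) (use assms in auto)
  also have "\<dots> = \<zero>"
  proof -
    have "f \<in> A - {k0} \<rightarrow> carrier R" using assms by auto
    then show ?thesis using assms finprod_closed[of f "A - {k0}"] by simp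
  qed
  finally show ?thesis .
qed

lemma (in domain) finprod_zero_imp:
  assumes "finite A" "f \<in> A \<rightarrow> carrier R" "finprod R f A = \<zero>"
  shows "\<exists>k\<in>A. f k = \<zero>"
  using assms
proof (induct A rule: finite_induct)
  case empty then show ?case by simp
next
  case (insert k F)
  have "f k \<otimes> finprod R f F = \<zero>" using insert by auto
  then have "f k = \<zero> \<or> finprod R f F = \<zero>"
    using integral insert.prems finprod_closed[of f F] by auto
  then show ?case using insert by auto
qed


declare upt_Suc[simp del]

theorem mainTheorem10:
  fixes Rs :: "('a, 'b) ring_scheme list" and n :: nat
  assumes "n \<ge> 1"
    and "length Rs = n + 1"
    and "\<And>i. i < n + 1 \<Longrightarrow> cring (Rs ! i)"
    and "\<And>i. i < n + 1 \<Longrightarrow> \<one>\<^bsub>Rs ! i\<^esub> \<noteq> \<zero>\<^bsub>Rs ! i\<^esub>"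
  shows "(\<forall>I. ideal I (RDirProd_list Rs) \<and> I \<noteq> carrier (RDirProd_list Rs)
              \<longrightarrow> weakly_n_absorbing (RDirProd_list Rs) n I)
         \<longleftrightarrow> (\<forall>i < n + 1. field (Rs ! i))"
proof -
  have len: "length Rs = n + 1" by (rule assms(2))
  have cr: "\<And>i. i < length Rs \<Longrightarrow> cring (Rs ! i)" using assms(3) len by auto
  interpret C: cring "DP Rs" using P_cring cr by blast
  have zc: "\<And>l. l < n + 1 \<Longrightarrow> ring.zero (Rs ! l) \<in> carrier (Rs ! l)"
    using assms(3) cring.cring_simprules(2) by blast
  have oc: "\<And>l. l < n + 1 \<Longrightarrow> monoid.one (Rs ! l) \<in> carrier (Rs ! l)"
    using assms(3) cring.cring_simprules(6) by blast
  have fin_nth: "\<And>a A l. finite A \<Longrightarrow> a \<in> A \<rightarrow> carrier (DP Rs) \<Longrightarrow> l < n + 1 \<Longrightarrow>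
      finprod (DP Rs) a A ! l = finprod (Rs ! l) (\<lambda>k. a k ! l) A"
    using P_finprod_nth[OF cr] len by auto
  show ?thesis
  proof
    assume H: "\<forall>I. ideal I (DP Rs) \<and> I \<noteq> carrier (DP Rs) \<longrightarrow> weakly_n_absorbing (DP Rs) n I"
    show "\<forall>i<n + 1. field (Rs ! i)"
    proof (intro allI impI, rule ccontr)
      fix m assume m: "m < n + 1" and nf: "\<not> field (Rs ! m)"
      interpret M: cring "Rs ! m" using assms(3) m by blast
      have "Units (Rs ! m) \<noteq> carrier (Rs ! m) - {ring.zero (Rs ! m)}" using M.cring_fieldI nf by blast
      moreover have "Units (Rs ! m) \<subseteq> carrier (Rs ! m)" using M.Units_closed by blast
      moreover have "ring.zero (Rs ! m) \<notin> Units (Rs ! m)"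
      proof
        assume u: "ring.zero (Rs ! m) \<in> Units (Rs ! m)"
        have "monoid.one (Rs ! m) = inv\<^bsub>Rs ! m\<^esub> ring.zero (Rs ! m) \<otimes>\<^bsub>Rs ! m\<^esub> ring.zero (Rs ! m)"
          using M.Units_l_inv[OF u] by simp
        also have "\<dots> = ring.zero (Rs ! m)" using M.Units_inv_closed[OF u] by simp
        finally show False using assms(4)[OF m] by simp
      qed
      ultimately obtain x where x: "x \<in> carrier (Rs ! m)" "x \<noteq> ring.zero (Rs ! m)" "x \<notin> Units (Rs ! m)"
        by blast
      have nounit: "\<And>r. r \<in> carrier (Rs ! m) \<Longrightarrow> r \<otimes>\<^bsub>Rs ! m\<^esub> x \<noteq> monoid.one (Rs ! m)"
      proof
        fix r assume r: "r \<in> carrier (Rs ! m)" and e: "r \<otimes>\<^bsub>Rs ! m\<^esub> x = monoid.one (Rs ! m)"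
        then have "x \<in> Units (Rs ! m)" unfolding Units_def using x(1) M.m_comm[OF r x(1)] by auto
        then show False using x(3) by blast
      qed
      define Xv where "Xv = map (\<lambda>l. if l = m then x else ring.zero (Rs ! l)) [0..<n+1]"
      define a where "a = (\<lambda>k. map (\<lambda>l. if k = m then (if l = m then x else monoid.one (Rs ! l))
                         else (if l = k then ring.zero (Rs ! l) else monoid.one (Rs ! l))) [0..<n+1])"
      have Xc: "Xv \<in> carrier (DP Rs)"
        unfolding P_carrier_iff Xv_def using len x zc by auto
      have ac: "\<And>k. a k \<in> carrier (DP Rs)"
        unfolding P_carrier_iff a_def using len x zc oc by auto
      then have acf: "\<And>A. a \<in> A \<rightarrow> carrier (DP Rs)" by auto
      define I where "I = cgenideal (DP Rs) Xv"
      have Iid: "ideal I (DP Rs)" unfolding I_def by (rule C.cgenideal_ideal[OF Xc])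
      have memI: "\<And>y. y \<in> I \<Longrightarrow> (\<forall>l. l < n + 1 \<longrightarrow> l \<noteq> m \<longrightarrow> y ! l = ring.zero (Rs ! l)) \<and>
                      (\<exists>r \<in> carrier (Rs ! m). y ! m = r \<otimes>\<^bsub>Rs ! m\<^esub> x)"
      proof -
        fix y assume "y \<in> I"
        then obtain r where r: "r \<in> carrier (DP Rs)" "y = r \<otimes>\<^bsub>DP Rs\<^esub> Xv"
          unfolding I_def cgenideal_def by auto
        have yn: "\<And>l. l < n + 1 \<Longrightarrow> y ! l = r ! l \<otimes>\<^bsub>Rs ! l\<^esub> Xv ! l"
          using P_mult_nth[OF r(1) Xc] r(2) len by simp
        have rl: "\<And>l. l < n + 1 \<Longrightarrow> r ! l \<in> carrier (Rs ! l)" using r(1) P_carrier_iff len by metis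
        show "?thesis y"
        proof
          show "\<forall>l. l < n + 1 \<longrightarrow> l \<noteq> m \<longrightarrow> y ! l = ring.zero (Rs ! l)"
          proof (intro allI impI)
            fix l assume l: "l < n + 1" "l \<noteq> m"
            have "Xv ! l = ring.zero (Rs ! l)" unfolding Xv_def using l by (simp del: upt_Suc)
            then show "y ! l = ring.zero (Rs ! l)" using yn[OF l(1)] rl[OF l(1)]
              cring.cring_simprules(27)[OF assms(3)[OF l(1)]] by simp
          qed
          have "Xv ! m = x" unfolding Xv_def using m by (simp del: upt_Suc)
          then show "\<exists>r \<in> carrier (Rs ! m). y ! m = r \<otimes>\<^bsub>Rs ! m\<^esub> x" using yn[OF m] rl[OF m] by auto
        qed
      qed
      have proper: "I \<noteq> carrier (DP Rs)"
      proof
        assume "I = carrier (DP Rs)"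
        then have "monoid.one (DP Rs) \<in> I" by simp
        then obtain r where "r \<in> carrier (Rs ! m)" "monoid.one (DP Rs) ! m = r \<otimes>\<^bsub>Rs ! m\<^esub> x" using memI by blast
        then show False using P_one_nth[of m Rs] len m nounit by auto
      qed
      have W: "weakly_n_absorbing (DP Rs) n I" using H Iid proper by blast
      have full: "finprod (DP Rs) a {..n} = Xv"
      proof (rule nth_equalityI)
        show "length (finprod (DP Rs) a {..n}) = length Xv"
          using C.finprod_closed[OF acf] P_carrier_iff Xc by metis
        fix l assume "l < length (finprod (DP Rs) a {..n})"
        then have l: "l < n + 1" using C.finprod_closed[OF acf] P_carrier_iff len by metis
        interpret L: cring "Rs ! l" using assms(3) l by blast
        have cf: "(\<lambda>k. a k ! l) \<in> {..n} \<rightarrow> carrier (Rs ! l)"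
        proof
          fix k show "a k ! l \<in> carrier (Rs ! l)" using ac[of k, unfolded P_carrier_iff] len l by simp
        qed
        show "finprod (DP Rs) a {..n} ! l = Xv ! l"
        proof (cases "l = m")
          case True
          have "finprod (Rs ! l) (\<lambda>k. a k ! l) {..n} = a m ! l"
            by (rule L.finprod_single[OF _ _ cf]) (use m l True in \<open>auto simp: a_def simp del: upt_Suc\<close>)
          then show ?thesis using fin_nth[OF _ acf l] True l unfolding Xv_def a_def by (simp del: upt_Suc)
        next
          case False
          have "finprod (Rs ! l) (\<lambda>k. a k ! l) {..n} = ring.zero (Rs ! l)"
            by (rule L.finprod_zero_factor[OF _ _ cf, of l]) (use l False in \<open>auto simp: a_def simp del: upt_Suc\<close>)
          then show ?thesis using fin_nth[OF _ acf l] False l unfolding Xv_def by (simp del: upt_Suc)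
        qed
      qed
      have nz: "finprod (DP Rs) a {..n} \<noteq> ring.zero (DP Rs)"
      proof
        assume "finprod (DP Rs) a {..n} = ring.zero (DP Rs)"
        then have "Xv ! m = ring.zero (DP Rs) ! m" using full by simp
        then show False using P_zero_nth[of m Rs] len m x(2) unfolding Xv_def by (simp del: upt_Suc)
      qed
      have inI: "finprod (DP Rs) a {..n} \<in> I" unfolding full I_def by (rule C.cgenideal_self[OF Xc])
      obtain j where j: "j \<le> n" "finprod (DP Rs) a ({..n} - {j}) \<in> I"
        using W nz inI acf unfolding weakly_n_absorbing_def by blast
      have jl: "j < n + 1" using j by simp
      interpret J: cring "Rs ! j" using assms(3) jl by blast
      have Qj: "finprod (DP Rs) a ({..n} - {j}) ! j = monoid.one (Rs ! j)"
      proof -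
        have "finprod (Rs ! j) (\<lambda>k. a k ! j) ({..n} - {j}) = monoid.one (Rs ! j)"
          by (rule J.finprod_one_eqI) (use jl in \<open>auto simp: a_def simp del: upt_Suc\<close>)
        then show ?thesis using fin_nth[OF _ acf jl] by simp
      qed
      show False
      proof (cases "j = m")
        case True
        then obtain r where "r \<in> carrier (Rs ! m)" "monoid.one (Rs ! m) = r \<otimes>\<^bsub>Rs ! m\<^esub> x"
          using memI[OF j(2)] Qj by auto
        then show False using nounit by metis
      next
        case False
        then show False using memI[OF j(2)] Qj jl assms(4)[OF jl] by auto
      qed
    qed
  next
    assume F: "\<forall>i<n + 1. field (Rs ! i)"
    show "\<forall>I. ideal I (DP Rs) \<and> I \<noteq> carrier (DP Rs) \<longrightarrow> weakly_n_absorbing (DP Rs) n I"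
    proof (intro allI impI)
      fix I assume HI: "ideal I (DP Rs) \<and> I \<noteq> carrier (DP Rs)"
      have main: "\<forall>a. a \<in> {..n} \<rightarrow> carrier (DP Rs) \<longrightarrow>
        finprod (DP Rs) a {..n} \<noteq> ring.zero (DP Rs) \<longrightarrow> finprod (DP Rs) a {..n} \<in> I \<longrightarrow>
        (\<exists>j\<le>n. finprod (DP Rs) a ({..n} - {j}) \<in> I)"
      proof (intro allI impI)
        fix a assume ac: "a \<in> {..n} \<rightarrow> carrier (DP Rs)"
          and nz: "finprod (DP Rs) a {..n} \<noteq> ring.zero (DP Rs)" and pI: "finprod (DP Rs) a {..n} \<in> I"
        define p where "p = finprod (DP Rs) a {..n}"
        have pc: "p \<in> carrier (DP Rs)" unfolding p_def using C.finprod_closed[OF ac] .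
        have plen: "length p = n + 1" using pc P_carrier_iff len by metis
        have pl: "\<And>l. l < n + 1 \<Longrightarrow> p ! l \<in> carrier (Rs ! l)" using pc P_carrier_iff len by metis
        have pnth: "\<And>l. l < n + 1 \<Longrightarrow> p ! l = finprod (Rs ! l) (\<lambda>k. a k ! l) {..n}"
          unfolding p_def using fin_nth[OF _ ac] by simp
        have cf: "\<And>l A. l < n + 1 \<Longrightarrow> A \<subseteq> {..n} \<Longrightarrow> (\<lambda>k. a k ! l) \<in> A \<rightarrow> carrier (Rs ! l)"
        proof
          fix l A k assume l: "l < n + 1" and A: "A \<subseteq> {..n}" and k: "k \<in> A"
          then have "a k \<in> carrier (DP Rs)" using ac by auto
          then show "a k ! l \<in> carrier (Rs ! l)" using l len unfolding P_carrier_iff by simp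
        qed
        obtain i0 where i0: "i0 < n + 1" "p ! i0 \<noteq> ring.zero (Rs ! i0)"
        proof (rule ccontr)
          assume "\<not> thesis"
          then have "\<forall>l < n + 1. p ! l = ring.zero (Rs ! l)" using that by blast
          then have "p = ring.zero (DP Rs)"
            by (intro nth_equalityI) (auto simp: plen P_zero_length len P_zero_nth)
          then show False using nz p_def by simp
        qed
        define T where "T = {l. l < n + 1 \<and> p ! l = ring.zero (Rs ! l)}"
        have ex: "\<And>l. l \<in> T \<Longrightarrow> \<exists>k. k \<le> n \<and> a k ! l = ring.zero (Rs ! l)"
        proof -
          fix l assume "l \<in> T"
          then have l: "l < n + 1" and z: "finprod (Rs ! l) (\<lambda>k. a k ! l) {..n} = ring.zero (Rs ! l)"
            unfolding T_def using pnth by auto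
          have "domain (Rs ! l)" using F l field.axioms(1) by blast
          from domain.finprod_zero_imp[OF this _ cf[OF l] z] show "\<exists>k. k \<le> n \<and> a k ! l = ring.zero (Rs ! l)"
            by auto
        qed
        define kf where "kf = (\<lambda>l. SOME k. k \<le> n \<and> a k ! l = ring.zero (Rs ! l))"
        have kf: "\<And>l. l \<in> T \<Longrightarrow> kf l \<le> n \<and> a (kf l) ! l = ring.zero (Rs ! l)"
          unfolding kf_def using ex by (rule someI_ex)
        have TS: "T \<subseteq> {..n} - {i0}" unfolding T_def using i0 by auto
        have "card T \<le> card ({..n} - {i0})" by (rule card_mono[OF _ TS]) simp
        also have "\<dots> = n" using i0 by simp
        finally have cT: "card T \<le> n" .
        have finT: "finite T" using TS finite_subset by blast
        obtain j where j: "j \<le> n" "j \<notin> kf ` T"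
        proof (rule ccontr)
          assume "\<not> thesis"
          then have "{..n} \<subseteq> kf ` T" using that by blast
          then have "card {..n} \<le> card (kf ` T)" using finT by (intro card_mono) auto
          also have "\<dots> \<le> card T" by (rule card_image_le[OF finT])
          finally show False using cT by simp
        qed
        define Q where "Q = finprod (DP Rs) a ({..n} - {j})"
        have acQ: "a \<in> {..n} - {j} \<rightarrow> carrier (DP Rs)" using ac by auto
        have Qc: "Q \<in> carrier (DP Rs)" unfolding Q_def using C.finprod_closed[OF acQ] .
        have Qlen: "length Q = n + 1" using Qc P_carrier_iff len by metis
        have Ql: "\<And>l. l < n + 1 \<Longrightarrow> Q ! l \<in> carrier (Rs ! l)" using Qc P_carrier_iff len by metis
        have QT: "\<And>l. l \<in> T \<Longrightarrow> Q ! l = ring.zero (Rs ! l)"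
        proof -
          fix l assume lT: "l \<in> T"
          then have l: "l < n + 1" unfolding T_def by auto
          have "cring (Rs ! l)" using assms(3) l by blast
          have "finprod (Rs ! l) (\<lambda>k. a k ! l) ({..n} - {j}) = ring.zero (Rs ! l)"
          proof -
            have k1: "kf l \<in> {..n} - {j}" using kf[OF lT] j lT by auto
            have k2: "a (kf l) ! l = ring.zero (Rs ! l)" using kf[OF lT] by auto
            have sub: "{..n} - {j} \<subseteq> {..n}" by auto
            show ?thesis
              by (rule cring.finprod_zero_factor[OF \<open>cring (Rs ! l)\<close> _ k1 cf[OF l sub] k2]) simp
          qed
          then show "Q ! l = ring.zero (Rs ! l)" unfolding Q_def using fin_nth[OF _ acQ l] by simp
        qed
        define c where "c = map (\<lambda>l. if p ! l = ring.zero (Rs ! l) then ring.zero (Rs ! l)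
                             else monoid.mult (Rs ! l) (Q ! l) (m_inv (Rs ! l) (p ! l))) [0..<n+1]"
        have unitp: "\<And>l. l < n + 1 \<Longrightarrow> p ! l \<noteq> ring.zero (Rs ! l) \<Longrightarrow> p ! l \<in> Units (Rs ! l)"
          using F field.field_Units pl by blast
        have cc: "c \<in> carrier (DP Rs)"
          unfolding P_carrier_iff
        proof (intro conjI allI impI)
          show "length c = length Rs" unfolding c_def using len by simp
          fix l assume "l < length Rs"
          then have l: "l < n + 1" using len by simp
          interpret L: cring "Rs ! l" using assms(3) l by blast
          show "c ! l \<in> carrier (Rs ! l)"
            unfolding c_def using l zc[OF l] Ql[OF l] L.Units_inv_closed[OF unitp[OF l]]
            by (simp del: upt_Suc)
        qed
        have eq: "c \<otimes>\<^bsub>DP Rs\<^esub> p = Q"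
        proof (rule nth_equalityI)
          show "length (c \<otimes>\<^bsub>DP Rs\<^esub> p) = length Q"
            using C.m_closed[OF cc pc] P_carrier_iff Qlen len by metis
          fix l assume "l < length (c \<otimes>\<^bsub>DP Rs\<^esub> p)"
          then have l: "l < n + 1" using C.m_closed[OF cc pc] P_carrier_iff len by metis
          interpret L: cring "Rs ! l" using assms(3) l by blast
          have e: "(c \<otimes>\<^bsub>DP Rs\<^esub> p) ! l = c ! l \<otimes>\<^bsub>Rs ! l\<^esub> p ! l"
            using P_mult_nth[OF cc pc] l len by simp
          show "(c \<otimes>\<^bsub>DP Rs\<^esub> p) ! l = Q ! l"
          proof (cases "p ! l = ring.zero (Rs ! l)")
            case True
            then have "l \<in> T" unfolding T_def using l by simp
            then show ?thesis using e True QT c_def l by (simp del: upt_Suc)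
          next
            case False
            have u: "p ! l \<in> Units (Rs ! l)" using unitp[OF l False] .
            have "c ! l = Q ! l \<otimes>\<^bsub>Rs ! l\<^esub> inv\<^bsub>Rs ! l\<^esub> (p ! l)"
              unfolding c_def using l False by (simp del: upt_Suc)
            then show ?thesis using e L.m_assoc[OF Ql[OF l] L.Units_inv_closed[OF u] pl[OF l]]
              L.Units_l_inv[OF u] Ql[OF l] by simp
          qed
        qed
        have "Q \<in> I" using ideal.I_l_closed[OF conjunct1[OF HI] pI[folded p_def] cc] eq by simp
        then show "\<exists>j\<le>n. finprod (DP Rs) a ({..n} - {j}) \<in> I" using j Q_def by blast
      qed
      show "weakly_n_absorbing (DP Rs) n I"
        unfolding weakly_n_absorbing_def using HI main by blast
    qed
  qed
qed

end
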